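(* Let $n\ge2$, $v\in V(\mathbb{T}_n^2)\setminus\{\mathbf 0\}$, $h(x)=\log(1+x)/\sqrt{\log(1+\|v\|_1)}$ for $x\ge0$, and define $\eta:V(\mathbb{T}_n^2)\to[0,\infty)$ by $\eta(w)=0$ if $\|w\|_1\le\sqrt{\|v\|_1}$, $\eta(w)=h(\|w\|_1)-h(\sqrt{\|v\|_1})$ if $\sqrt{\|v\|_1}\le\|w\|_1\le\|v\|_1$, and $\eta(w)=h(\|v\|_1)-h(\sqrt{\|v\|_1})$ if $\|w\|_1\ge\|v\|_1$. Let $\eta'(w,k)=\max\{\eta(w)-\eta(u):u\in V(\mathbb{T}_n^2),\ d(w,u)\le k\}$ with $d$ the graph distance in $\mathbb{T}_n^2$. Then there is an absolute constant $C>0$ (independent of $n$ and $v$) such that $$\sum_{w\in V(\mathbb{T}_n^2)}\sum_{k=0}^\infty2^{-k}\eta'(w,k+1)^2\le C,$$ and for every $\alpha>0$ and $0<\varepsilon\le 1/2$, $$L(\alpha\eta,\varepsilon)\ge\Big\lfloor(1+\sqrt{\|v\|_1})\Big(\exp\Big(\frac{\varepsilon\sqrt{\log(1+\|v\|_1)}}{2\alpha}\Big)-1\Big)\Big\rfloor-1.$$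
   Context: $\mathbb{T}_n^2$ is the discrete torus with vertex set $\{-n+1,\dots,n\}^2$, adjacent if equal in one coordinate and differing by $1$ mod $2n$ in the other; $\mathbf 0=(0,0)$, $\|(w_1,w_2)\|_1=|w_1|+|w_2|$. For $\tau:V\to[0,\infty)$ on a finite connected graph with distance $d$: $\tau'(w,k)=\max\{\tau(w)-\tau(u):d(w,u)\le k\}$ and $L(\tau,\varepsilon)=\sup\{k\ge0 \text{ integer}:\tau'(w,k)\le\varepsilon/2\ \forall w\}-1$. *)

theory Defs
  imports "HOL-Analysis.Analysis"
begin

definition torusV :: "nat \<Rightarrow> (int \<times> int) set" where
  "torusV n = {-int n + 1 .. int n} \<times> {-int n + 1 .. int n}"

definition torus_adj :: "nat \<Rightarrow> int \<times> int \<Rightarrow> int \<times> int \<Rightarrow> bool" where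
  "torus_adj n w u \<longleftrightarrow> w \<in> torusV n \<and> u \<in> torusV n \<and>
     ((fst w = fst u \<and> ((snd w - snd u) mod (2 * int n) = (1) mod (2 * int n) \<or> (snd w - snd u) mod (2 * int n) = (-1) mod (2 * int n))) \<or>
      (snd w = snd u \<and> ((fst w - fst u) mod (2 * int n) = (1) mod (2 * int n) \<or> (fst w - fst u) mod (2 * int n) = (-1) mod (2 * int n))))"

definition torus_edges :: "nat \<Rightarrow> ((int \<times> int) \<times> (int \<times> int)) set" where
  "torus_edges n = {(w, u). torus_adj n w u}"

definition torus_dist :: "nat \<Rightarrow> int \<times> int \<Rightarrow> int \<times> int \<Rightarrow> nat" where
  "torus_dist n w u = (LEAST k. (w, u) \<in> (torus_edges n) ^^ k)"

definition norm1 :: "int \<times> int \<Rightarrow> int" where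
  "norm1 w = \<bar>fst w\<bar> + \<bar>snd w\<bar>"

definition osc :: "'a set \<Rightarrow> ('a \<Rightarrow> 'a \<Rightarrow> nat) \<Rightarrow> ('a \<Rightarrow> real) \<Rightarrow> 'a \<Rightarrow> nat \<Rightarrow> real" where
  "osc V d \<tau> w k = Max {\<tau> w - \<tau> u | u. u \<in> V \<and> d w u \<le> k}"

text \<open>L(tau,eps) = sup{k >= 0 integer : tau'(w,k) <= eps/2 for all w} - 1, valued in the
  extended reals (the supremum may be infinite).\<close>
definition Lfun :: "'a set \<Rightarrow> ('a \<Rightarrow> 'a \<Rightarrow> nat) \<Rightarrow> ('a \<Rightarrow> real) \<Rightarrow> real \<Rightarrow> ereal" where
  "Lfun V d \<tau> \<epsilon> = Sup {ereal (real k) | k. \<forall>w\<in>V. osc V d \<tau> w k \<le> \<epsilon> / 2} - 1"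

definition hfun :: "int \<times> int \<Rightarrow> real \<Rightarrow> real" where
  "hfun v x = ln (1 + x) / sqrt (ln (1 + real_of_int (norm1 v)))"

definition eta :: "int \<times> int \<Rightarrow> int \<times> int \<Rightarrow> real" where
  "eta v w = (let a = real_of_int (norm1 v); x = real_of_int (norm1 w) in
     if x \<le> sqrt a then 0
     else if x \<le> a then hfun v x - hfun v (sqrt a)
     else hfun v a - hfun v (sqrt a))"

end

theory Submission
  imports Defs
begin

lemma modstep:
  fixes a b N :: int
  assumes "N \<ge> 1" "-N+1 \<le> a" "a \<le> N" "-N+1 \<le> b" "b \<le> N"
    and "(a - b) mod (2*N) = 1 mod (2*N) \<or> (a - b) mod (2*N) = (-1) mod (2*N)"
  shows "\<bar>\<bar>a\<bar> - \<bar>b\<bar>\<bar> \<le> 1"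
proof -
  from assms(6) obtain e where e: "e = 1 \<or> e = -1" "(a - b) mod (2*N) = e mod (2*N)" by blast
  then have "(2*N) dvd (a - b - e)" by (metis mod_eq_dvd_iff)
  then obtain q where q: "a - b - e = 2*N*q" by (auto elim: dvdE)
  have "q \<ge> -1"
  proof (rule ccontr)
    assume "\<not> q \<ge> -1" then have "q \<le> -2" by simp
    then have "2*N*q \<le> 2*N*(-2)" using assms(1) by (intro mult_left_mono) auto
    then show False using q assms e(1) by linarith
  qed
  moreover have "q \<le> 1"
  proof (rule ccontr)
    assume "\<not> q \<le> 1" then have "q \<ge> 2" by simp
    then have "2*N*q \<ge> 2*N*2" using assms(1) by (intro mult_left_mono) auto
    then show False using q assms e(1) by linarith
  qed
  ultimately have "q = -1 \<or> q = 0 \<or> q = 1" by linarith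
  then show ?thesis using q e(1) assms(1-5) by auto
qed

lemma adj_norm:
  assumes "n \<ge> 1" "torus_adj n w u"
  shows "\<bar>norm1 w - norm1 u\<bar> \<le> 1"
proof -
  obtain a b c d where w: "w = (a,b)" and u: "u = (c,d)" by (cases w, cases u) auto
  have N: "int n \<ge> 1" using assms(1) by simp
  from assms(2) have V: "-int n+1 \<le> a" "a \<le> int n" "-int n+1 \<le> b" "b \<le> int n"
     "-int n+1 \<le> c" "c \<le> int n" "-int n+1 \<le> d" "d \<le> int n"
    by (auto simp: torus_adj_def torusV_def w u)
  from assms(2) consider
      "a = c" "(b - d) mod (2*int n) = 1 mod (2*int n) \<or> (b - d) mod (2*int n) = (-1) mod (2*int n)"
    | "b = d" "(a - c) mod (2*int n) = 1 mod (2*int n) \<or> (a - c) mod (2*int n) = (-1) mod (2*int n)"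
    by (auto simp: torus_adj_def w u)
  then show ?thesis
  proof cases
    case 1
    with modstep[OF N V(3,4,7,8)] show ?thesis by (simp add: norm1_def w u)
  next
    case 2
    with modstep[OF N V(1,2,5,6)] show ?thesis by (simp add: norm1_def w u)
  qed
qed

lemma relpow_norm:
  assumes "n \<ge> 1" "(w,u) \<in> torus_edges n ^^ k"
  shows "\<bar>norm1 w - norm1 u\<bar> \<le> int k"
  using assms(2)
proof (induction k arbitrary: u)
  case 0 then show ?case by simp
next
  case (Suc k)
  then obtain y where y: "(w,y) \<in> torus_edges n ^^ k" "(y,u) \<in> torus_edges n" by auto
  have "\<bar>norm1 y - norm1 u\<bar> \<le> 1" using adj_norm[OF assms(1)] y(2) by (auto simp: torus_edges_def)
  with Suc.IH[OF y(1)] show ?case by simp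
qed

lemma adj_sym:
  assumes "torus_adj n w u" shows "torus_adj n u w"
proof -
  have key: "(y - x) mod M = 1 mod M \<or> (y - x) mod M = (-1) mod M"
    if "(x - y) mod M = 1 mod M \<or> (x - y) mod M = (-1) mod M" for x y M :: int
  proof -
    have e: "(y - x) = - (x - y)" by simp
    from that show ?thesis
    proof
      assume "(x - y) mod M = 1 mod M"
      then have "(- (x - y)) mod M = (- 1) mod M" by (rule mod_minus_cong)
      then show ?thesis by simp
    next
      assume "(x - y) mod M = (-1) mod M"
      then have "(- (x - y)) mod M = (- (-1)) mod M" by (rule mod_minus_cong)
      then show ?thesis by simp
    qed
  qed
  show ?thesis using assms key unfolding torus_adj_def by metis
qed

lemma conn0:
  assumes "n \<ge> 1"
  shows "w \<in> torusV n \<Longrightarrow> norm1 w = int N \<Longrightarrow> (w, (0,0)) \<in> (torus_edges n)\<^sup>*"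
proof (induction N arbitrary: w)
  case 0
  obtain a b where w: "w = (a,b)" by (cases w)
  with 0 have "a = 0 \<and> b = 0" by (simp add: norm1_def) arith
  then show ?case using w by simp
next
  case (Suc N)
  obtain a b where w: "w = (a,b)" by (cases w)
  have V: "-int n+1 \<le> a" "a \<le> int n" "-int n+1 \<le> b" "b \<le> int n"
    using Suc.prems by (auto simp: torusV_def w)
  have step: "(w,u) \<in> torus_edges n \<Longrightarrow> u \<in> torusV n \<Longrightarrow> norm1 u = int N \<Longrightarrow> ?case" for u
    using Suc.IH[of u] by (meson converse_rtrancl_into_rtrancl)
  consider "a > 0" | "a < 0" | "a = 0" "b > 0" | "a = 0" "b < 0" | "a = 0" "b = 0" by linarith
  then show ?case
  proof cases
    case 1
    show ?thesis by (rule step[of "(a-1,b)"]) (use 1 V Suc.prems in \<open>auto simp: torus_edges_def torus_adj_def torusV_def w norm1_def\<close>)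
  next
    case 2
    show ?thesis by (rule step[of "(a+1,b)"]) (use 2 V Suc.prems in \<open>auto simp: torus_edges_def torus_adj_def torusV_def w norm1_def\<close>)
  next
    case 3
    show ?thesis by (rule step[of "(a,b-1)"]) (use 3 V Suc.prems in \<open>auto simp: torus_edges_def torus_adj_def torusV_def w norm1_def\<close>)
  next
    case 4
    show ?thesis by (rule step[of "(a,b+1)"]) (use 4 V Suc.prems in \<open>auto simp: torus_edges_def torus_adj_def torusV_def w norm1_def\<close>)
  next
    case 5
    then show ?thesis using Suc.prems by (simp add: w norm1_def)
  qed
qed

lemma conn:
  assumes "n \<ge> 1" "w \<in> torusV n" "u \<in> torusV n"
  shows "\<exists>k. (w,u) \<in> torus_edges n ^^ k"
proof -
  have n1: "norm1 x \<ge> 0" for x by (simp add: norm1_def)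
  have a: "(x, (0,0)) \<in> (torus_edges n)\<^sup>*" if "x \<in> torusV n" for x
    using conn0[OF assms(1) that, of "nat (norm1 x)"] n1[of x] by simp
  have sym: "(torus_edges n)\<inverse> = torus_edges n"
    using adj_sym by (auto simp: torus_edges_def)
  have "((0,0), u) \<in> (torus_edges n)\<^sup>*"
    using rtrancl_converseI[OF a[OF assms(3)]] sym by simp
  with a[OF assms(2)] have "(w,u) \<in> (torus_edges n)\<^sup>*" by (rule rtrancl_trans)
  then show ?thesis by (simp add: rtrancl_power)
qed

lemma dist_norm:
  assumes "n \<ge> 1" "w \<in> torusV n" "u \<in> torusV n"
  shows "\<bar>norm1 w - norm1 u\<bar> \<le> int (torus_dist n w u)"
proof -
  have "(w,u) \<in> torus_edges n ^^ (torus_dist n w u)"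
    unfolding torus_dist_def using conn[OF assms] by (rule LeastI_ex)
  then show ?thesis by (rule relpow_norm[OF assms(1)])
qed

lemma dist_refl: "torus_dist n w w = 0"
  unfolding torus_dist_def by (rule Least_eq_0) simp


definition cl :: "real \<Rightarrow> real \<Rightarrow> real" where "cl a x = max (sqrt a) (min a x)"

lemma cl_mono: "a \<ge> 1 \<Longrightarrow> x \<le> y \<Longrightarrow> cl a x \<le> cl a y"
  by (simp add: cl_def)

lemma cl_lip: "a \<ge> 1 \<Longrightarrow> m \<ge> 0 \<Longrightarrow> cl a x \<le> cl a (x - m) + m"
  unfolding cl_def by (auto simp: max_def min_def)

lemma cl_ge: "a \<ge> 1 \<Longrightarrow> cl a x \<ge> sqrt a" by (simp add: cl_def)

lemma sqrt_le_self: "a \<ge> 1 \<Longrightarrow> sqrt a \<le> a"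
proof -
  assume a: "a \<ge> 1"
  have s1: "sqrt a \<ge> 1" using a by simp
  have "sqrt a * 1 \<le> sqrt a * sqrt a" using s1 by (intro mult_left_mono) auto
  also have "\<dots> = a" using a by simp
  finally show ?thesis by simp
qed

lemma diff_bound1:
  fixes a x y m :: real
  assumes a: "a \<ge> 1" and m: "m \<ge> 0" and y: "y \<ge> x - m"
  shows "ln (1 + cl a x) - ln (1 + cl a y) \<le> ln (1 + m / (1 + cl a (x - m)))"
proof -
  define s where "s = cl a (x - m)"
  define t where "t = cl a x"
  have s0: "s \<ge> 0" using cl_ge[OF a, of "x-m"] by (simp add: s_def) (meson order_trans real_sqrt_ge_zero a zero_le_one)
  have sy: "s \<le> cl a y" unfolding s_def by (rule cl_mono[OF a y])
  have ts: "t \<le> s + m" unfolding s_def t_def by (rule cl_lip[OF a m])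
  have t0: "t \<ge> 0" using cl_ge[OF a, of x] by (simp add: t_def) (meson order_trans real_sqrt_ge_zero a zero_le_one)
  have "ln (1 + t) - ln (1 + cl a y) \<le> ln (1 + t) - ln (1 + s)" using sy s0 by simp
  also have "\<dots> = ln ((1 + t) / (1 + s))" using s0 t0 by (simp add: ln_div)
  also have "\<dots> \<le> ln (1 + m / (1 + s))"
  proof -
    have "(1 + t) / (1 + s) \<le> (1 + s + m) / (1 + s)" by (rule divide_right_mono) (use ts s0 in auto)
    also have "\<dots> = 1 + m / (1 + s)" using s0 by (simp add: field_simps)
    finally have "(1 + t) / (1 + s) \<le> 1 + m / (1 + s)" .
    moreover have "(1 + t) / (1 + s) > 0" using s0 t0 by simp
    ultimately show ?thesis by (simp add: ln_le_cancel_iff)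
  qed
  finally show ?thesis by (simp add: s_def t_def)
qed

lemma diff_bound2:
  fixes a x y m :: real
  assumes a: "a \<ge> 1" and m: "m \<ge> 0" and y: "y \<ge> x - m"
  shows "ln (1 + cl a x) - ln (1 + cl a y) \<le> ln (1 + m / (1 + sqrt a))"
proof -
  have "m / (1 + cl a (x - m)) \<le> m / (1 + sqrt a)"
  proof -
    have p1: "1 + sqrt a > 0" using a by (simp add: add_pos_nonneg)
    have p2: "1 + sqrt a \<le> 1 + cl a (x - m)" using cl_ge[OF a, of "x-m"] by simp
    show ?thesis by (rule divide_left_mono[OF p2 m mult_pos_pos]) (use p1 p2 in auto)
  qed
  moreover have "0 \<le> m / (1 + cl a (x - m))"
    using cl_ge[OF a, of "x-m"] m by (metis add_nonneg_nonneg divide_nonneg_nonneg order_trans real_sqrt_ge_zero zero_le_one a)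
  ultimately have "ln (1 + m / (1 + cl a (x - m))) \<le> ln (1 + m / (1 + sqrt a))" by simp
  with diff_bound1[OF assms] show ?thesis by linarith
qed

definition Bd :: "real \<Rightarrow> real \<Rightarrow> real \<Rightarrow> real" where
  "Bd a m x = (if x < 2*m then m else if x < 2*a then 4*m/(1+x) else 0)"

lemma diff_bound3:
  fixes a x y m :: real
  assumes a: "a \<ge> 1" and m: "m \<ge> 1" and y: "y \<ge> x - m" and x: "x \<ge> 0"
  shows "ln (1 + cl a x) - ln (1 + cl a y) \<le> Bd a m x"
proof -
  define s where "s = cl a (x - m)"
  have s0: "s \<ge> 0" using cl_ge[OF a, of "x-m"] by (simp add: s_def) (meson order_trans real_sqrt_ge_zero a zero_le_one)
  have D: "ln (1 + cl a x) - ln (1 + cl a y) \<le> m / (1 + s)"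
    using diff_bound1[OF a _ y] m ln_add_one_self_le_self[of "m/(1+s)"] s0
    unfolding s_def by (smt (verit) divide_nonneg_nonneg)
  have sa: "sqrt a \<le> a" by (rule sqrt_le_self[OF a])
  show ?thesis
  proof (cases "x < 2*m")
    case True
    have "m / (1 + s) \<le> m" using s0 m by (simp add: divide_le_eq)  
    then show ?thesis using D True by (simp add: Bd_def)
  next
    case False
    show ?thesis
    proof (cases "x - m \<ge> a")
      case True
      have "cl a (x - m) = a" "cl a x = a" using True sa m by (auto simp: cl_def)
      moreover have "cl a y \<ge> a" using cl_mono[OF a y] \<open>cl a (x-m) = a\<close> by simp
      ultimately have "ln (1 + cl a x) - ln (1 + cl a y) \<le> 0" using a by simp
      moreover have "Bd a m x \<ge> 0" using x m by (simp add: Bd_def)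
      ultimately show ?thesis by linarith
    next
      case c2: False
      then have xa: "x < 2*a" using False by simp
      have "s \<ge> x - m" using c2 by (simp add: s_def cl_def)
      then have "s \<ge> x/2" using False by simp
      then have "m / (1 + s) \<le> m / (1 + x/2)" using m x by (intro divide_left_mono) auto
      also have "\<dots> \<le> m / ((1+x)/2)" using m x by (intro divide_left_mono) auto
      also have "\<dots> = 2*m/(1+x)" by simp
      also have "\<dots> \<le> 4*m/(1+x)" using divide_right_mono[of "2*m" "4*m" "1+x"] m x by simp
      finally show ?thesis using D False xa by (simp add: Bd_def)
    qed
  qed
qed

lemma Bd_le: assumes "m \<ge> 1" "x \<ge> 0" shows "Bd a m x \<le> 2*m"
proof -
  have "4*m/(1+x) \<le> 2*m" if "\<not> x < 2*m"
  proof -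
    have "4*m/(1+x) \<le> 4*m/(1+2*m)" using that assms by (intro divide_left_mono) auto
    also have "\<dots> \<le> 2*m" using assms by (simp add: divide_le_eq algebra_simps)
    finally show ?thesis .
  qed
  then show ?thesis using assms by (auto simp: Bd_def)
qed

lemma Bd_ge: "m \<ge> 1 \<Longrightarrow> x \<ge> 0 \<Longrightarrow> Bd a m x \<ge> 0"
  by (auto simp: Bd_def)

lemma Bd_sq: "m \<ge> 1 \<Longrightarrow> x \<ge> 0 \<Longrightarrow>
   (Bd a m x)\<^sup>2 \<le> (if x < 2*m then m\<^sup>2 else 0) + (if x < 2*a then 16*m\<^sup>2/(1+x)\<^sup>2 else 0)"
  by (auto simp: Bd_def power_divide)



lemma int_sym_insert: "{-int (Suc M)..int (Suc M)} = insert (int M + 1) (insert (- int M - 1) {-int M..int M})"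
  by auto

lemma sum_ins2: "(\<Sum>j\<in>{-int (Suc M)..int (Suc M)}. f j) = f (int M + 1) + f (-int M - 1) + (\<Sum>j\<in>{-int M..int M}. f j)"
  unfolding int_sym_insert by (simp add: add.assoc)

lemma finite_torusV: "finite (torusV n)" by (simp add: torusV_def)

lemma tele:
  fixes c :: real assumes c: "c \<ge> 1"
  shows "(\<Sum>j\<in>{-int M..int M}. 1/(c + \<bar>real_of_int j\<bar>)\<^sup>2) \<le> 3/c - 2/(c + real M)"
proof (induction M)
  case 0
  have "1/c^2 \<le> 1/c" using c by (simp add: power2_eq_square divide_le_eq)
  then show ?case by simp
next
  case (Suc M)
  define y where "y = c + real M"
  have y: "y \<ge> 1" using c by (simp add: y_def)
  have key: "1/(y+1)\<^sup>2 \<le> 1/y - 1/(y+1)"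
  proof -
    have "1/y - 1/(y+1) = 1/(y*(y+1))" using y by (simp add: field_simps)
    moreover have "1/(y+1)\<^sup>2 \<le> 1/(y*(y+1))" using y
      by (intro divide_left_mono) (auto simp: power2_eq_square intro!: mult_right_mono mult_pos_pos)
    ultimately show ?thesis by simp
  qed
  have e1: "\<bar>real_of_int (int M + 1)\<bar> = real M + 1" by simp
  have e2: "\<bar>real_of_int (- int M - 1)\<bar> = real M + 1" by simp
  have "(\<Sum>j\<in>{-int (Suc M)..int (Suc M)}. 1/(c + \<bar>real_of_int j\<bar>)\<^sup>2)
      = 2/(y+1)\<^sup>2 + (\<Sum>j\<in>{-int M..int M}. 1/(c + \<bar>real_of_int j\<bar>)\<^sup>2)"
    unfolding sum_ins2 by (simp add: y_def algebra_simps)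
  also have "\<dots> \<le> 2/(y+1)\<^sup>2 + (3/c - 2/y)" using Suc.IH by (simp add: y_def)
  also have "\<dots> \<le> 3/c - 2/(c + real (Suc M))" using key by (simp add: y_def algebra_simps)
  finally show ?case .
qed

lemma harm:
  "(\<Sum>i\<in>{-int M..int M}. 1/(1 + \<bar>real_of_int i\<bar>)) \<le> 1 + 2 * ln (1 + real M)"
proof (induction M)
  case 0 then show ?case by simp
next
  case (Suc M)
  define y where "y = 1 + real M"
  have y: "y \<ge> 1" by (simp add: y_def)
  have key: "1/(y+1) \<le> ln (y+1) - ln y"
  proof -
    have "ln (y / (y+1)) \<le> y/(y+1) - 1" using y by (intro ln_le_minus_one) auto
    moreover have "ln (y / (y+1)) = ln y - ln (y+1)" using y by (simp add: ln_div)
    moreover have "y/(y+1) - 1 = - (1/(y+1))" using y by (simp add: field_simps)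
    ultimately show ?thesis by linarith
  qed
  have "(\<Sum>i\<in>{-int (Suc M)..int (Suc M)}. 1/(1 + \<bar>real_of_int i\<bar>))
      = 2/(y+1) + (\<Sum>i\<in>{-int M..int M}. 1/(1 + \<bar>real_of_int i\<bar>))"
    unfolding sum_ins2 by (simp add: y_def algebra_simps)
  also have "\<dots> \<le> 2/(y+1) + (1 + 2 * ln y)" using Suc.IH by (simp add: y_def)
  also have "\<dots> \<le> 1 + 2 * ln (1 + real (Suc M))" using key by (simp add: y_def algebra_simps)
  finally show ?case .
qed

lemma torusV_prod: "torusV n = {-int n+1..int n} \<times> {-int n+1..int n}"
  by (simp add: torusV_def)

lemma sumP2:
  "(\<Sum>w\<in>torusV n. (if \<bar>fst w\<bar> \<le> int N then 1/(1 + \<bar>real_of_int (fst w)\<bar> + \<bar>real_of_int (snd w)\<bar>)\<^sup>2 else 0))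
     \<le> 3 * (1 + 2 * ln (1 + real N))"
proof -
  define I where "I = {-int n+1..int n}"
  have inner: "(\<Sum>j\<in>I. 1/(1 + \<bar>real_of_int i\<bar> + \<bar>real_of_int j\<bar>)\<^sup>2) \<le> 3/(1 + \<bar>real_of_int i\<bar>)" for i
  proof -
    have "(\<Sum>j\<in>I. 1/(1 + \<bar>real_of_int i\<bar> + \<bar>real_of_int j\<bar>)\<^sup>2)
        \<le> (\<Sum>j\<in>{-int n..int n}. 1/((1 + \<bar>real_of_int i\<bar>) + \<bar>real_of_int j\<bar>)\<^sup>2)"
      by (rule sum_mono2) (auto simp: I_def add.assoc)
    also have "\<dots> \<le> 3/(1 + \<bar>real_of_int i\<bar>) - 2/((1 + \<bar>real_of_int i\<bar>) + real n)"
      by (rule tele) simp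
    also have "\<dots> \<le> 3/(1 + \<bar>real_of_int i\<bar>)" by simp
    finally show ?thesis .
  qed
  have "(\<Sum>w\<in>torusV n. (if \<bar>fst w\<bar> \<le> int N then 1/(1 + \<bar>real_of_int (fst w)\<bar> + \<bar>real_of_int (snd w)\<bar>)\<^sup>2 else 0))
      = (\<Sum>i\<in>I. \<Sum>j\<in>I. (if \<bar>i\<bar> \<le> int N then 1/(1 + \<bar>real_of_int i\<bar> + \<bar>real_of_int j\<bar>)\<^sup>2 else 0))"
    unfolding torusV_prod I_def[symmetric] by (simp add: sum.cartesian_product case_prod_beta)
  also have "\<dots> \<le> (\<Sum>i\<in>I. (if \<bar>i\<bar> \<le> int N then 3/(1 + \<bar>real_of_int i\<bar>) else 0))"
    by (rule sum_mono) (use inner in auto)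
  also have "\<dots> = (\<Sum>i\<in>{i\<in>I. \<bar>i\<bar> \<le> int N}. 3/(1 + \<bar>real_of_int i\<bar>))"
    by (rule sum.inter_filter[symmetric]) (simp add: I_def)
  also have "\<dots> \<le> (\<Sum>i\<in>{-int N..int N}. 3/(1 + \<bar>real_of_int i\<bar>))"
    by (rule sum_mono2) auto
  also have "\<dots> = 3 * (\<Sum>i\<in>{-int N..int N}. 1/(1 + \<bar>real_of_int i\<bar>))"
    by (simp add: sum_distrib_left)
  also have "\<dots> \<le> 3 * (1 + 2 * ln (1 + real N))" using harm[of N] by simp
  finally show ?thesis .
qed

lemma sumP1:
  "(\<Sum>w\<in>torusV n. (if real_of_int \<bar>fst w\<bar> < 2*m \<and> real_of_int \<bar>snd w\<bar> < 2*m then (c::real) else 0))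
     \<le> (4*real K+1)^2 * c" if "c \<ge> 0" "m \<le> real K"
proof -
  have "(\<Sum>w\<in>torusV n. (if real_of_int \<bar>fst w\<bar> < 2*m \<and> real_of_int \<bar>snd w\<bar> < 2*m then c else 0))
     = (\<Sum>w\<in>{w\<in>torusV n. real_of_int \<bar>fst w\<bar> < 2*m \<and> real_of_int \<bar>snd w\<bar> < 2*m}. c)"
    by (rule sum.inter_filter[symmetric, OF finite_torusV])
  also have "\<dots> \<le> (\<Sum>w\<in>{-2*int K..2*int K} \<times> {-2*int K..2*int K}. c)"
  proof (rule sum_mono2)
    show "{w\<in>torusV n. real_of_int \<bar>fst w\<bar> < 2*m \<and> real_of_int \<bar>snd w\<bar> < 2*m}
       \<subseteq> {-2*int K..2*int K} \<times> {-2*int K..2*int K}"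
    proof
      fix w assume "w \<in> {w\<in>torusV n. real_of_int \<bar>fst w\<bar> < 2*m \<and> real_of_int \<bar>snd w\<bar> < 2*m}"
      then have "real_of_int \<bar>fst w\<bar> < 2 * real K" "real_of_int \<bar>snd w\<bar> < 2 * real K" using that by auto
      then have "\<bar>fst w\<bar> < 2 * int K" "\<bar>snd w\<bar> < 2 * int K" by linarith+
      then show "w \<in> {-2*int K..2*int K} \<times> {-2*int K..2*int K}" by (cases w) auto
    qed
  qed (use that in auto)
  also have "\<dots> = (4*real K+1)^2 * c"
  proof -
    have "card {-2*int K..2*int K} = 4*K+1" by simp
    then show ?thesis by (simp add: card_cartesian_product power2_eq_square algebra_simps)
  qed
  finally show ?thesis .
qed


lemma eta_eq:
  assumes "norm1 v \<ge> 1"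
  shows "eta v w = (ln (1 + cl (real_of_int (norm1 v)) (real_of_int (norm1 w)))
                     - ln (1 + sqrt (real_of_int (norm1 v)))) / sqrt (ln (1 + real_of_int (norm1 v)))"
proof -
  define a where "a = real_of_int (norm1 v)"
  define x where "x = real_of_int (norm1 w)"
  have a: "a \<ge> 1" using assms by (simp add: a_def)
  have sa: "sqrt a \<le> a" by (rule sqrt_le_self[OF a])
  show ?thesis
    unfolding a_def[symmetric] x_def[symmetric]
    using sa by (auto simp: eta_def Let_def hfun_def cl_def a_def[symmetric] x_def[symmetric] diff_divide_distrib)
qed

lemma osc_le:
  assumes "finite V" "w \<in> V" "d w w \<le> k" "\<And>u. u \<in> V \<Longrightarrow> d w u \<le> k \<Longrightarrow> \<tau> w - \<tau> u \<le> B"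
  shows "osc V d \<tau> w k \<le> B"
proof -
  have eq: "{\<tau> w - \<tau> u | u. u \<in> V \<and> d w u \<le> k} = (\<lambda>u. \<tau> w - \<tau> u) ` {u \<in> V. d w u \<le> k}" by auto
  show ?thesis unfolding osc_def eq
    using assms by (subst Max_le_iff) auto
qed

lemma osc_ge:
  assumes "finite V" "w \<in> V" "d w w \<le> k"
  shows "0 \<le> osc V d \<tau> w k"
proof -
  have eq: "{\<tau> w - \<tau> u | u. u \<in> V \<and> d w u \<le> k} = (\<lambda>u. \<tau> w - \<tau> u) ` {u \<in> V. d w u \<le> k}" by auto
  have "\<tau> w - \<tau> w \<in> (\<lambda>u. \<tau> w - \<tau> u) ` {u \<in> V. d w u \<le> k}" using assms by auto
  then show ?thesis unfolding osc_def eq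
    using assms by (subst Max_ge_iff) auto
qed

lemma norm1_pos: "v \<in> torusV n - {(0,0)} \<Longrightarrow> norm1 v \<ge> 1"
  by (cases v) (auto simp: norm1_def)

lemma eta_diff:
  assumes n: "n \<ge> 2" and v: "v \<in> torusV n - {(0,0)}" and w: "w \<in> torusV n" and u: "u \<in> torusV n"
  shows "\<exists>y. y \<ge> real_of_int (norm1 w) - real (torus_dist n w u) \<and>
     eta v w - eta v u = (ln (1 + cl (real_of_int (norm1 v)) (real_of_int (norm1 w)))
        - ln (1 + cl (real_of_int (norm1 v)) y)) / sqrt (ln (1 + real_of_int (norm1 v)))"
proof -
  have "\<bar>norm1 w - norm1 u\<bar> \<le> int (torus_dist n w u)" using n w u by (intro dist_norm) auto
  then have "real_of_int (norm1 u) \<ge> real_of_int (norm1 w) - real (torus_dist n w u)" by linarith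
  moreover have "eta v w - eta v u = (ln (1 + cl (real_of_int (norm1 v)) (real_of_int (norm1 w)))
        - ln (1 + cl (real_of_int (norm1 v)) (real_of_int (norm1 u)))) / sqrt (ln (1 + real_of_int (norm1 v)))"
    using norm1_pos[OF v] by (simp add: eta_eq diff_divide_distrib)
  ultimately show ?thesis by blast
qed



lemma summable_g: "summable (\<lambda>k. (1/2::real)^k * (real k + 1)^4)"
proof (rule summable_ratio_test[where c = "3/4" and N = 9])
  fix k :: nat assume k: "k \<ge> 9"
  have "real k + 2 \<le> (11/10) * (real k + 1)" using k by simp
  then have "(real k + 2)^4 \<le> ((11/10) * (real k + 1))^4" by (intro power_mono) auto
  also have "\<dots> = (11/10)^4 * (real k + 1)^4" by (rule power_mult_distrib)
  also have "\<dots> \<le> (3/2) * (real k + 1)^4" by (intro mult_right_mono) (auto simp: power4_eq_xxxx)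
  finally have *: "(real k + 2)^4 \<le> (3/2) * (real k + 1)^4" .
  have "norm ((1/2::real)^(Suc k) * (real (Suc k) + 1)^4) = (1/2)^k * ((1/2) * (real k + 2)^4)"
    by (simp add: add.commute)
  also have "\<dots> \<le> (1/2)^k * ((1/2) * ((3/2) * (real k + 1)^4))"
    using * by (intro mult_left_mono) auto
  also have "\<dots> = 3/4 * norm ((1/2::real)^k * (real k + 1)^4)" by simp
  finally show "norm ((1/2::real)^(Suc k) * (real (Suc k) + 1)^4) \<le> 3/4 * norm ((1/2::real)^k * (real k + 1)^4)" .
qed simp

lemma ln2_ge: "ln (2::real) \<ge> 1/2"
proof -
  have "ln (1/2::real) \<le> 1/2 - 1" by (rule ln_le_minus_one) simp
  then show ?thesis by (simp add: ln_div)
qed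

lemma osc_sq_bound:
  assumes n: "n \<ge> 2" and v: "v \<in> torusV n - {(0,0)}" and w: "w \<in> torusV n" and m: "m \<ge> 1"
  shows "(osc (torusV n) (torus_dist n) (eta v) w m)\<^sup>2 \<le>
     (Bd (real_of_int (norm1 v)) (real m) (real_of_int (norm1 w)))\<^sup>2 / ln (1 + real_of_int (norm1 v))"
proof -
  define a where "a = real_of_int (norm1 v)"
  have a: "a \<ge> 1" using norm1_pos[OF v] by (simp add: a_def)
  define L where "L = ln (1 + a)"
  have L: "L > 0" using a by (simp add: L_def)
  define x where "x = real_of_int (norm1 w)"
  have x: "x \<ge> 0" by (simp add: x_def norm1_def)
  have m': "real m \<ge> 1" using m by simp
  have le: "osc (torusV n) (torus_dist n) (eta v) w m \<le> Bd a (real m) x / sqrt L"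
  proof (rule osc_le[OF finite_torusV w])
    show "torus_dist n w w \<le> m" by (simp add: dist_refl)
    fix u assume u: "u \<in> torusV n" and d: "torus_dist n w u \<le> m"
    obtain y where y: "y \<ge> real_of_int (norm1 w) - real (torus_dist n w u)"
      and eq: "eta v w - eta v u = (ln (1 + cl a x) - ln (1 + cl a y)) / sqrt L"
      using eta_diff[OF n v w u] unfolding a_def L_def x_def by blast
    have y': "y \<ge> x - real m" using y d unfolding x_def by linarith
    have "ln (1 + cl a x) - ln (1 + cl a y) \<le> Bd a (real m) x"
      by (rule diff_bound3[OF a m' y' x])
    then show "eta v w - eta v u \<le> Bd a (real m) x / sqrt L"
      unfolding eq using L by (intro divide_right_mono) auto
  qed
  have ge: "0 \<le> osc (torusV n) (torus_dist n) (eta v) w m"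
    by (rule osc_ge[OF finite_torusV w]) (simp add: dist_refl)
  have "(osc (torusV n) (torus_dist n) (eta v) w m)\<^sup>2 \<le> (Bd a (real m) x / sqrt L)\<^sup>2"
    using le ge by (intro power_mono) auto
  also have "\<dots> = (Bd a (real m) x)\<^sup>2 / L" using L by (simp add: power_divide)
  finally show ?thesis by (simp add: a_def L_def x_def)
qed



lemma sum_osc:
  assumes n: "n \<ge> 2" and v: "v \<in> torusV n - {(0,0)}" and m: "m \<ge> 1"
  shows "(\<Sum>w\<in>torusV n. (osc (torusV n) (torus_dist n) (eta v) w m)\<^sup>2) \<le> 338 * (real m)^4"
proof -
  define a where "a = real_of_int (norm1 v)"
  have a: "a \<ge> 1" using norm1_pos[OF v] by (simp add: a_def)
  define L where "L = ln (1 + a)"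
  have L2: "L \<ge> 1/2"
  proof -
    have "ln 2 \<le> L" using a by (simp add: L_def)
    then show ?thesis using ln2_ge by linarith
  qed
  have L: "L > 0" using L2 by simp
  define N where "N = nat (2 * norm1 v)"
  have N: "real N = 2 * a" using norm1_pos[OF v] by (simp add: N_def a_def)
  define mr where "mr = real m"
  have mr: "mr \<ge> 1" using m by (simp add: mr_def)
  define F1 where "F1 = (\<lambda>w::int\<times>int. (if real_of_int \<bar>fst w\<bar> < 2*mr \<and> real_of_int \<bar>snd w\<bar> < 2*mr then mr\<^sup>2 else 0))"
  define F2 where "F2 = (\<lambda>w::int\<times>int. (if \<bar>fst w\<bar> \<le> int N then 1/(1 + \<bar>real_of_int (fst w)\<bar> + \<bar>real_of_int (snd w)\<bar>)\<^sup>2 else 0))"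
  have pw: "(osc (torusV n) (torus_dist n) (eta v) w m)\<^sup>2 \<le> (F1 w + 16 * mr\<^sup>2 * F2 w) / L"
    if w: "w \<in> torusV n" for w
  proof -
    define x where "x = real_of_int (norm1 w)"
    have xe: "x = \<bar>real_of_int (fst w)\<bar> + \<bar>real_of_int (snd w)\<bar>" by (simp add: x_def norm1_def)
    have x: "x \<ge> 0" by (simp add: xe)
    have "(Bd a mr x)\<^sup>2 \<le> (if x < 2*mr then mr\<^sup>2 else 0) + (if x < 2*a then 16*mr\<^sup>2/(1+x)\<^sup>2 else 0)"
      by (rule Bd_sq[OF mr x])
    also have "\<dots> \<le> F1 w + 16 * mr\<^sup>2 * F2 w"
    proof (rule add_mono)
      show "(if x < 2*mr then mr\<^sup>2 else 0) \<le> F1 w" unfolding F1_def using xe by auto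
      have "x < 2*a \<Longrightarrow> \<bar>fst w\<bar> \<le> int N"
      proof -
        assume "x < 2*a"
        then have "real_of_int \<bar>fst w\<bar> \<le> real N" using xe N by simp
        then show ?thesis by linarith
      qed
      then show "(if x < 2*a then 16*mr\<^sup>2/(1+x)\<^sup>2 else 0) \<le> 16 * mr\<^sup>2 * F2 w"
        unfolding F2_def using xe by (auto simp: add.assoc)
    qed
    finally have B: "(Bd a mr x)\<^sup>2 \<le> F1 w + 16 * mr\<^sup>2 * F2 w" .
    have "(osc (torusV n) (torus_dist n) (eta v) w m)\<^sup>2 \<le> (Bd a mr x)\<^sup>2 / L"
      using osc_sq_bound[OF n v w m] by (simp add: a_def L_def mr_def x_def)
    also have "\<dots> \<le> (F1 w + 16 * mr\<^sup>2 * F2 w) / L" using B L by (intro divide_right_mono) auto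
    finally show ?thesis .
  qed
  have "(\<Sum>w\<in>torusV n. (osc (torusV n) (torus_dist n) (eta v) w m)\<^sup>2)
      \<le> (\<Sum>w\<in>torusV n. (F1 w + 16 * mr\<^sup>2 * F2 w) / L)" by (rule sum_mono) (rule pw)
  also have "\<dots> = ((\<Sum>w\<in>torusV n. F1 w) + 16 * mr\<^sup>2 * (\<Sum>w\<in>torusV n. F2 w)) / L"
    by (simp only: sum_divide_distrib[symmetric] sum.distrib sum_distrib_left)
  also have "\<dots> \<le> ((4*real m+1)^2 * mr\<^sup>2 + 16 * mr\<^sup>2 * (3 * (1 + 2 * ln (1 + real N)))) / L"
  proof (rule divide_right_mono)
    have s1: "(\<Sum>w\<in>torusV n. F1 w) \<le> (4*real m+1)^2 * mr\<^sup>2"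
      unfolding F1_def by (rule sumP1) (auto simp: mr_def)
    have s2: "(\<Sum>w\<in>torusV n. F2 w) \<le> 3 * (1 + 2 * ln (1 + real N))"
      unfolding F2_def by (rule sumP2)
    show "(\<Sum>w\<in>torusV n. F1 w) + 16 * mr\<^sup>2 * (\<Sum>w\<in>torusV n. F2 w)
        \<le> (4*real m+1)^2 * mr\<^sup>2 + 16 * mr\<^sup>2 * (3 * (1 + 2 * ln (1 + real N)))"
      using s1 s2 by (intro add_mono mult_left_mono) auto
  qed (use L in auto)
  also have "\<dots> \<le> (25 * mr^4 + 48 * mr\<^sup>2 + 192 * mr\<^sup>2 * L) / L"
  proof (rule divide_right_mono)
    have lnN: "ln (1 + real N) \<le> 2 * L"
    proof -
      have "1 + real N \<le> (1 + a)^2" using N by (simp add: power2_eq_square algebra_simps)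
      then have "ln (1 + real N) \<le> ln ((1 + a)^2)" using a N by simp
      also have "\<dots> = 2 * L" using a by (simp add: ln_realpow L_def)
      finally show ?thesis .
    qed
    have q: "(4*real m+1)^2 * mr\<^sup>2 \<le> 25 * mr^4"
    proof -
      have "(4*mr+1)^2 \<le> (5*mr)^2" using mr by (intro power_mono) auto
      then have "(4*mr+1)^2 * mr\<^sup>2 \<le> (5*mr)^2 * mr\<^sup>2" by (intro mult_right_mono) auto
      then show ?thesis by (simp add: mr_def power2_eq_square power4_eq_xxxx algebra_simps)
    qed
    have "16 * mr\<^sup>2 * (3 * (1 + 2 * ln (1 + real N))) \<le> 16 * mr\<^sup>2 * (3 * (1 + 2 * (2 * L)))"
      using lnN by (intro mult_left_mono) auto
    then show "(4*real m+1)^2 * mr\<^sup>2 + 16 * mr\<^sup>2 * (3 * (1 + 2 * ln (1 + real N)))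
        \<le> 25 * mr^4 + 48 * mr\<^sup>2 + 192 * mr\<^sup>2 * L"
      using q by (simp add: algebra_simps)
  qed (use L in auto)
  also have "\<dots> = (25 * mr^4 + 48 * mr\<^sup>2) / L + 192 * mr\<^sup>2" using L by (simp add: field_simps)
  also have "\<dots> \<le> (25 * mr^4 + 48 * mr\<^sup>2) * 2 + 192 * mr\<^sup>2"
  proof -
    have "(25 * mr^4 + 48 * mr\<^sup>2) / L \<le> (25 * mr^4 + 48 * mr\<^sup>2) / (1/2)"
      using L2 by (intro divide_left_mono) auto
    then show ?thesis by simp
  qed
  also have "\<dots> \<le> 338 * (real m)^4"
  proof -
    have "mr\<^sup>2 \<le> mr^4"
    proof -
      have "mr\<^sup>2 * 1 \<le> mr\<^sup>2 * mr\<^sup>2" using mr by (intro mult_left_mono) auto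
      then show ?thesis by (simp add: power4_eq_xxxx power2_eq_square algebra_simps)
    qed
    then show ?thesis by (simp add: mr_def)
  qed
  finally show ?thesis .
qed



lemma part2:
  fixes \<alpha> \<epsilon> :: real
  assumes n: "n \<ge> 2" and v: "v \<in> torusV n - {(0,0)}" and al: "\<alpha> > 0" and ep: "0 < \<epsilon>"
  shows "Lfun (torusV n) (torus_dist n) (\<lambda>w. \<alpha> * eta v w) \<epsilon> \<ge>
              ereal (real_of_int (\<lfloor>(1 + sqrt (real_of_int (norm1 v))) *
                 (exp (\<epsilon> * sqrt (ln (1 + real_of_int (norm1 v))) / (2 * \<alpha>)) - 1)\<rfloor> - 1))"
proof -
  define a where "a = real_of_int (norm1 v)"
  have a: "a \<ge> 1" using norm1_pos[OF v] by (simp add: a_def)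
  define L where "L = ln (1 + a)"
  have L: "L > 0" using a by (simp add: L_def)
  define E where "E = exp (\<epsilon> * sqrt L / (2 * \<alpha>))"
  have E: "E \<ge> 1" using ep al L by (simp add: E_def)
  define K where "K = \<lfloor>(1 + sqrt a) * (E - 1)\<rfloor>"
  have K0: "K \<ge> 0" using E a by (simp add: K_def)
  define k where "k = nat K"
  have kK: "real k \<le> (1 + sqrt a) * (E - 1)" using K0 by (simp add: k_def K_def)
  have sa: "1 + sqrt a > 0" using a by (simp add: add_pos_nonneg)
  have osck: "osc (torusV n) (torus_dist n) (\<lambda>w. \<alpha> * eta v w) w k \<le> \<epsilon> / 2" if w: "w \<in> torusV n" for w
  proof (rule osc_le[OF finite_torusV w])
    show "torus_dist n w w \<le> k" by (simp add: dist_refl)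
    fix u assume u: "u \<in> torusV n" and d: "torus_dist n w u \<le> k"
    obtain y where y: "y \<ge> real_of_int (norm1 w) - real (torus_dist n w u)"
      and eq: "eta v w - eta v u = (ln (1 + cl a (real_of_int (norm1 w))) - ln (1 + cl a y)) / sqrt L"
      using eta_diff[OF n v w u] unfolding a_def L_def by blast
    have y': "y \<ge> real_of_int (norm1 w) - real k" using y d by linarith
    have D: "ln (1 + cl a (real_of_int (norm1 w))) - ln (1 + cl a y) \<le> ln (1 + real k / (1 + sqrt a))"
      by (rule diff_bound2[OF a _ y']) simp
    have kpos: "0 \<le> real k / (1 + sqrt a)" using sa by simp
    have "real k / (1 + sqrt a) \<le> E - 1" using kK sa by (simp add: divide_le_eq mult.commute)
    then have "ln (1 + real k / (1 + sqrt a)) \<le> ln E"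
    proof -
      have p: "0 < 1 + real k / (1 + sqrt a)" using kpos by linarith
      have Epos: "0 < E" by (simp add: E_def)
      have "1 + real k / (1 + sqrt a) \<le> E" using \<open>real k / (1 + sqrt a) \<le> E - 1\<close> by linarith
      then show ?thesis using ln_le_cancel_iff[OF p Epos] by blast
    qed
    also have "\<dots> = \<epsilon> * sqrt L / (2 * \<alpha>)" by (simp add: E_def)
    finally have D2: "ln (1 + cl a (real_of_int (norm1 w))) - ln (1 + cl a y) \<le> \<epsilon> * sqrt L / (2 * \<alpha>)"
      using D by linarith
    have "\<alpha> * eta v w - \<alpha> * eta v u = \<alpha> * (eta v w - eta v u)" by (simp add: algebra_simps)
    also have "\<dots> = \<alpha> * ((ln (1 + cl a (real_of_int (norm1 w))) - ln (1 + cl a y)) / sqrt L)" by (simp add: eq)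
    also have "\<dots> \<le> \<alpha> * ((\<epsilon> * sqrt L / (2 * \<alpha>)) / sqrt L)"
      using D2 L al by (intro mult_left_mono divide_right_mono) auto
    also have "\<dots> = \<epsilon> / 2" using L al by (simp add: field_simps)
    finally show "\<alpha> * eta v w - \<alpha> * eta v u \<le> \<epsilon> / 2" .
  qed
  have "ereal (real k) \<in> {ereal (real k) | k. \<forall>w\<in>torusV n. osc (torusV n) (torus_dist n) (\<lambda>w. \<alpha> * eta v w) w k \<le> \<epsilon> / 2}"
    using osck by blast
  then have "ereal (real k) \<le> Sup {ereal (real k) | k. \<forall>w\<in>torusV n. osc (torusV n) (torus_dist n) (\<lambda>w. \<alpha> * eta v w) w k \<le> \<epsilon> / 2}"
    by (rule Sup_upper)
  then have "ereal (real k) - 1 \<le> Lfun (torusV n) (torus_dist n) (\<lambda>w. \<alpha> * eta v w) \<epsilon>"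
    unfolding Lfun_def by (rule ereal_minus_mono) simp
  moreover have "ereal (real k) - 1 = ereal (real_of_int (K - 1))" using K0 by (simp add: k_def one_ereal_def)
  ultimately show ?thesis by (simp add: K_def E_def L_def a_def)
qed



lemma part1:
  "\<exists>C>0. \<forall>n v. n \<ge> 2 \<longrightarrow> v \<in> torusV n - {(0, 0)} \<longrightarrow>
            (\<forall>w\<in>torusV n. summable (\<lambda>k. (1/2) ^ k * (osc (torusV n) (torus_dist n) (eta v) w (k + 1))\<^sup>2)) \<and>
            (\<Sum>w\<in>torusV n. \<Sum>k. (1/2) ^ k * (osc (torusV n) (torus_dist n) (eta v) w (k + 1))\<^sup>2) \<le> C"
proof -
  define g where "g = (\<lambda>k. (1/2::real)^k * (real k + 1)^4)"
  have sg: "summable g" unfolding g_def by (rule summable_g)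
  have g0: "0 \<le> suminf g" using sg by (intro suminf_nonneg) (auto simp: g_def)
  define C where "C = 338 * suminf g + 1"
  have "C > 0" using g0 by (simp add: C_def)
  moreover have "(\<forall>w\<in>torusV n. summable (\<lambda>k. (1/2) ^ k * (osc (torusV n) (torus_dist n) (eta v) w (k + 1))\<^sup>2)) \<and>
            (\<Sum>w\<in>torusV n. \<Sum>k. (1/2) ^ k * (osc (torusV n) (torus_dist n) (eta v) w (k + 1))\<^sup>2) \<le> C"
    if n: "n \<ge> 2" and v: "v \<in> torusV n - {(0, 0)}" for n v
  proof -
    define f where "f = (\<lambda>w k. (1/2::real) ^ k * (osc (torusV n) (torus_dist n) (eta v) w (k + 1))\<^sup>2)"
    have fb: "f w k \<le> 338 * g k" "0 \<le> f w k" if w: "w \<in> torusV n" for w k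
    proof -
      have "(osc (torusV n) (torus_dist n) (eta v) w (k + 1))\<^sup>2
          \<le> (\<Sum>w\<in>torusV n. (osc (torusV n) (torus_dist n) (eta v) w (k+1))\<^sup>2)"
        by (rule member_le_sum[OF w]) (auto simp: finite_torusV)
      also have "\<dots> \<le> 338 * (real (k+1))^4" by (rule sum_osc[OF n v]) simp
      finally have "(osc (torusV n) (torus_dist n) (eta v) w (k + 1))\<^sup>2 \<le> 338 * (real k + 1)^4" by (simp add: add.commute)
      then show "f w k \<le> 338 * g k" unfolding f_def g_def by (simp add: mult_left_mono algebra_simps)
      show "0 \<le> f w k" by (simp add: f_def)
    qed
    have sg2: "summable (\<lambda>k. 338 * g k)" using sg by (rule summable_mult)
    have sf: "summable (f w)" if w: "w \<in> torusV n" for w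
      by (rule summable_comparison_test'[OF sg2, of 0]) (use fb[OF w] in auto)
    have "(\<Sum>w\<in>torusV n. suminf (f w)) = (\<Sum>k. \<Sum>w\<in>torusV n. f w k)"
      by (rule suminf_sum[symmetric]) (rule sf)
    also have "\<dots> \<le> (\<Sum>k. 338 * g k)"
    proof (rule suminf_le)
      show "summable (\<lambda>k. \<Sum>w\<in>torusV n. f w k)" by (rule summable_sum) (rule sf)
      show "summable (\<lambda>k. 338 * g k)" by (rule sg2)
      fix k
      have "(\<Sum>w\<in>torusV n. f w k) = (1/2)^k * (\<Sum>w\<in>torusV n. (osc (torusV n) (torus_dist n) (eta v) w (k+1))\<^sup>2)"
        by (simp add: f_def sum_distrib_left)
      also have "\<dots> \<le> (1/2)^k * (338 * (real (k+1))^4)"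
        by (intro mult_left_mono sum_osc[OF n v]) auto
      also have "\<dots> = 338 * g k" by (simp add: g_def algebra_simps)
      finally show "(\<Sum>w\<in>torusV n. f w k) \<le> 338 * g k" .
    qed
    also have "\<dots> = 338 * suminf g" using sg by (simp add: suminf_mult)
    also have "\<dots> \<le> C" by (simp add: C_def)
    finally show ?thesis using sf unfolding f_def by blast
  qed
  ultimately show ?thesis by blast
qed

theorem lemma4p5:
  shows "(\<exists>C>0. \<forall>n v. n \<ge> 2 \<longrightarrow> v \<in> torusV n - {(0, 0)} \<longrightarrow>
            (\<forall>w\<in>torusV n. summable (\<lambda>k. (1/2) ^ k * (osc (torusV n) (torus_dist n) (eta v) w (k + 1))\<^sup>2)) \<and>
            (\<Sum>w\<in>torusV n. \<Sum>k. (1/2) ^ k * (osc (torusV n) (torus_dist n) (eta v) w (k + 1))\<^sup>2) \<le> C)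
     \<and> (\<forall>n v (\<alpha>::real) (\<epsilon>::real). n \<ge> 2 \<longrightarrow> v \<in> torusV n - {(0, 0)} \<longrightarrow> \<alpha> > 0 \<longrightarrow>
            0 < \<epsilon> \<longrightarrow> \<epsilon> \<le> 1/2 \<longrightarrow>
            Lfun (torusV n) (torus_dist n) (\<lambda>w. \<alpha> * eta v w) \<epsilon> \<ge>
              ereal (real_of_int (\<lfloor>(1 + sqrt (real_of_int (norm1 v))) *
                 (exp (\<epsilon> * sqrt (ln (1 + real_of_int (norm1 v))) / (2 * \<alpha>)) - 1)\<rfloor> - 1)))"
  using part1 part2 by blast


end
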